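(* Let $X$ be a Polish space and let $T$ be either a (global) jointly continuous semigroup on $X$ or a local semigroup on $X$, and let $A$ be the Lie generator of $T$. Then $A$ has a positive eigenvalue (i.e. there exist $\lambda>0$ and $f \in D(A)$, $f\neq 0$, with $Af=\lambda f$) if and only if $T$ is a local semigroup.
   Context: $CB(X)$ denotes the Banach space (sup norm) of bounded continuous real-valued functions on $X$. A (global) jointly continuous semigroup on $X$ is a map $t\mapsto T(t)$ from $[0,\infty)$ to the set of maps $X\to X$ such that $T(0)x=x$ for all $x\in X$, $T(t)T(s)=T(t+s)$ for all $t,s\ge 0$ (composition), and $(t,x)\mapsto T(t)x$ is continuous on $[0,\infty)\times X$. A local semigroup on $X$ is given by a function $m: X\to(0,\infty]$ such that $1/m$ (with $1/\infty=0$) is continuous and $m$ is not identically $\infty$, together with maps $T(t)$ such that: $x\in D(T(t))$ if and only if $t\in[0,m(x))$; $T(0)x=x$; for $t,s\ge0$ and $x\in X$, $T(t)T(s)x=T(t+s)x$ holds if and only if $t+s<m(x)$; $(t,x)\mapsto T(t)x$ is continuous on $\{(t,x): 0\le t<m(x)\}$; and $T$ is maximal: if $\lim_{t\to s^-}T(t)x$ exists then $s<m(x)$. The Lie generator of $T$ is the linear operator $A$ on $CB(X)$ given by $A=\{(f,g)\in CB(X)^2 : g(x)=\lim_{t\to0^+}\frac1t\,(f(T(t)x)-f(x)) \text{ for every } x\in X\}$, i.e. $f\in D(A)$ and $Af=g$ exactly when this limit exists for every $x$ and defines a function $g\in CB(X)$. *)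

theory Defs
  imports "HOL-Analysis.Analysis" "HOL-Library.Extended_Real"
begin

definition global_semigroup :: "(real \<Rightarrow> 'a::topological_space \<Rightarrow> 'a) \<Rightarrow> bool" where
  "global_semigroup T \<longleftrightarrow>
     (\<forall>x. T 0 x = x) \<and>
     (\<forall>t s x. 0 \<le> t \<longrightarrow> 0 \<le> s \<longrightarrow> T t (T s x) = T (t + s) x) \<and>
     continuous_on ({0..} \<times> UNIV) (\<lambda>(t, x). T t x)"

text \<open>A local semigroup with lifetime m: T t x is meaningful exactly for 0 \<le> t < m x;
  outside this domain the value of T t x is irrelevant junk.\<close>
definition local_semigroup :: "('a::topological_space \<Rightarrow> ereal) \<Rightarrow> (real \<Rightarrow> 'a \<Rightarrow> 'a) \<Rightarrow> bool" where
  "local_semigroup m T \<longleftrightarrow>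
     (\<forall>x. 0 < m x) \<and>
     continuous_on UNIV (\<lambda>x. inverse (m x)) \<and>
     (\<exists>x. m x \<noteq> \<infinity>) \<and>
     (\<forall>x. T 0 x = x) \<and>
     (\<forall>t s x. 0 \<le> t \<longrightarrow> 0 \<le> s \<longrightarrow>
        ((ereal s < m x \<and> ereal t < m (T s x)) \<longleftrightarrow> ereal (t + s) < m x)) \<and>
     (\<forall>t s x. 0 \<le> t \<longrightarrow> 0 \<le> s \<longrightarrow> ereal (t + s) < m x \<longrightarrow> T t (T s x) = T (t + s) x) \<and>
     continuous_on {(t, x). 0 \<le> t \<and> ereal t < m x} (\<lambda>(t, x). T t x) \<and>
     (\<forall>x s. 0 < s \<longrightarrow> ereal s \<le> m x \<longrightarrow> (\<exists>l. ((\<lambda>t. T t x) \<longlongrightarrow> l) (at_left s)) \<longrightarrow> ereal s < m x)"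

definition lie_generator :: "(real \<Rightarrow> 'a::metric_space \<Rightarrow> 'a) \<Rightarrow> (('a \<Rightarrow>\<^sub>C real) \<times> ('a \<Rightarrow>\<^sub>C real)) set" where
  "lie_generator T = {(f, g). \<forall>x. ((\<lambda>t. (apply_bcontfun f (T t x) - apply_bcontfun f x) / t) \<longlongrightarrow> apply_bcontfun g x) (at_right 0)}"

definition has_positive_eigenvalue :: "(('a::metric_space \<Rightarrow>\<^sub>C real) \<times> ('a \<Rightarrow>\<^sub>C real)) set \<Rightarrow> bool" where
  "has_positive_eigenvalue A \<longleftrightarrow> (\<exists>c>0. \<exists>f. f \<noteq> 0 \<and> (f, c *\<^sub>R f) \<in> A)"

end

theory Submission
  imports Defs "HOL-Real_Asymp.Real_Asymp"
begin

lemma key_growth: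
  fixes \<phi> :: "real \<Rightarrow> real"
  assumes cont: "continuous_on {0..} \<phi>" and bnd: "\<And>t. t \<ge> 0 \<Longrightarrow> \<phi> t \<le> M"
    and pos: "\<phi> 0 > 0" and c: "c > 0"
    and der: "\<And>t. t \<ge> 0 \<Longrightarrow> ((\<lambda>h. (\<phi> (t+h) - \<phi> t)/h) \<longlongrightarrow> c * \<phi> t) (at_right 0)"
  shows False
proof -
  define a where "a = \<phi> 0"
  have a: "a > 0" using pos a_def by simp
  define g where "g t = \<phi> t - a - c*a/2*t" for t
  have gcont: "continuous_on {0..} g" unfolding g_def by (intro continuous_intros cont)
  have gpos: "g b \<ge> 0" if b: "b \<ge> 0" for b
  proof (rule ccontr)
    assume gb: "\<not> g b \<ge> 0"
    define Z where "Z = {0..b} \<inter> g -` {0..}"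
    have gc2: "continuous_on {0..b} g" using gcont by (rule continuous_on_subset) auto
    have "closed Z" unfolding Z_def
      by (rule continuous_closed_preimage[OF gc2]) auto
    moreover have "bounded Z" unfolding Z_def by (rule bounded_subset[of "{0..b}"]) auto
    ultimately have "compact Z" by (simp add: compact_eq_bounded_closed)
    moreover have "0 \<in> Z" unfolding Z_def g_def a_def using b by auto
    ultimately obtain \<tau> where tZ: "\<tau> \<in> Z" and tmax: "\<And>z. z \<in> Z \<Longrightarrow> z \<le> \<tau>"
      using compact_attains_sup[OF \<open>compact Z\<close>] \<open>0 \<in> Z\<close> by (metis empty_iff)
    have t0: "\<tau> \<ge> 0" "\<tau> \<le> b" and gt: "g \<tau> \<ge> 0" using tZ unfolding Z_def by auto
    have tb: "\<tau> < b" using t0 gt gb by (cases "\<tau> = b") auto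
    have "c*a/2*\<tau> \<ge> 0" using t0 a c by simp
    hence "\<phi> \<tau> \<ge> a" using gt unfolding g_def by linarith
    hence "c * \<phi> \<tau> \<ge> c*a" using c by simp
    hence "c * \<phi> \<tau> > c*a/2" using c a by simp
    hence ev1: "eventually (\<lambda>h. (\<phi> (\<tau>+h) - \<phi> \<tau>)/h > c*a/2) (at_right 0)"
      using order_tendstoD(1)[OF der[OF t0(1)]] by blast
    have ev2: "eventually (\<lambda>h. h \<in> {0<..<b-\<tau>}) (at_right 0)"
      using eventually_at_right_real[of 0 "b-\<tau>"] tb by simp
    obtain h where h1: "(\<phi> (\<tau>+h) - \<phi> \<tau>)/h > c*a/2" and h2: "0 < h" "h < b - \<tau>"
      using eventually_happens[OF eventually_conj[OF ev1 ev2]] by auto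
    have "\<phi> (\<tau>+h) - \<phi> \<tau> > c*a/2*h" using h1 h2 by (simp add: field_simps)
    moreover have "c*a/2*(\<tau>+h) = c*a/2*\<tau> + c*a/2*h" by (simp add: algebra_simps)
    ultimately have "g (\<tau>+h) > g \<tau>" unfolding g_def by linarith
    hence "\<tau>+h \<in> Z" using gt h2 t0 unfolding Z_def by auto
    thus False using tmax h2 by fastforce
  qed
  define t where "t = 2*\<bar>M\<bar>/(c*a) + 1"
  have t0: "t \<ge> 0" unfolding t_def using a c by simp
  have "\<phi> t \<ge> a + c*a/2*t" using gpos[OF t0] unfolding g_def by simp
  moreover have "c*a/2*t = \<bar>M\<bar> + c*a/2" unfolding t_def using a c by (simp add: field_simps)
  moreover have "c*a/2 > 0" using a c by simp
  moreover have "M \<le> \<bar>M\<bar>" by simp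
  ultimately have "\<phi> t > M" using a by linarith
  thus False using bnd[OF t0] by simp
qed

lemma global_no_eig:
  fixes T :: "real \<Rightarrow> 'a::metric_space \<Rightarrow> 'a"
  assumes G: "global_semigroup T"
  shows "\<not> has_positive_eigenvalue (lie_generator T)"
proof
  assume "has_positive_eigenvalue (lie_generator T)"
  then obtain c f where c: "c > 0" and f0: "f \<noteq> 0" and gen: "(f, c *\<^sub>R f) \<in> lie_generator T"
    unfolding has_positive_eigenvalue_def by blast
  have genx: "((\<lambda>t. (apply_bcontfun f (T t y) - apply_bcontfun f y) / t) \<longlongrightarrow> c * apply_bcontfun f y) (at_right 0)" for y
    using gen unfolding lie_generator_def by auto
  obtain x where fx: "apply_bcontfun f x \<noteq> 0"
    using f0 bcontfun_eqI[of f 0] by auto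
  have T0: "\<And>x. T 0 x = x" and Tsg: "\<And>t s x. 0 \<le> t \<Longrightarrow> 0 \<le> s \<Longrightarrow> T t (T s x) = T (t + s) x"
    and Tc: "continuous_on ({0..} \<times> UNIV) (\<lambda>(t, x). T t x)"
    using G unfolding global_semigroup_def by auto
  define \<sigma> where "\<sigma> = sgn (apply_bcontfun f x)"
  define \<phi> where "\<phi> t = \<sigma> * apply_bcontfun f (T t x)" for t
  have Tcx: "continuous_on {0..} (\<lambda>t. T t x)"
    by (rule continuous_on_compose2[OF Tc, of _ "\<lambda>t. (t, x)", simplified])
       (auto intro!: continuous_intros)
  have cont: "continuous_on {0..} \<phi>" unfolding \<phi>_def
    by (intro continuous_intros continuous_on_compose2[OF continuous_on_apply_bcontfun Tcx]) auto
  have bnd: "\<phi> t \<le> norm f" for t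
  proof -
    have "\<phi> t \<le> \<bar>apply_bcontfun f (T t x)\<bar>" unfolding \<phi>_def \<sigma>_def
      by (cases "apply_bcontfun f x > 0") (auto simp: sgn_if)
    also have "\<dots> \<le> norm f" using norm_bounded[of f "T t x"] by simp
    finally show ?thesis .
  qed
  have pos: "\<phi> 0 > 0" unfolding \<phi>_def \<sigma>_def T0 using fx
    by (cases "apply_bcontfun f x > 0") (auto simp: sgn_if mult_less_0_iff)
  have der: "((\<lambda>h. (\<phi> (t+h) - \<phi> t)/h) \<longlongrightarrow> c * \<phi> t) (at_right 0)" if t: "t \<ge> 0" for t
  proof -
    have "((\<lambda>h. \<sigma> * ((apply_bcontfun f (T h (T t x)) - apply_bcontfun f (T t x)) / h)) \<longlongrightarrow> \<sigma> * (c * apply_bcontfun f (T t x))) (at_right 0)"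
      by (intro tendsto_mult tendsto_const genx)
    moreover have "eventually (\<lambda>h. \<sigma> * ((apply_bcontfun f (T h (T t x)) - apply_bcontfun f (T t x)) / h) = (\<phi> (t+h) - \<phi> t)/h) (at_right 0)"
      using eventually_at_right_less[of 0]
    proof (rule eventually_mono)
      fix h :: real assume "0 < h"
      thus "\<sigma> * ((apply_bcontfun f (T h (T t x)) - apply_bcontfun f (T t x)) / h) = (\<phi> (t+h) - \<phi> t)/h"
        unfolding \<phi>_def using Tsg[of h t x] t by (simp add: algebra_simps add_divide_distrib diff_divide_distrib)
    qed
    ultimately have "((\<lambda>h. (\<phi> (t+h) - \<phi> t)/h) \<longlongrightarrow> \<sigma> * (c * apply_bcontfun f (T t x))) (at_right 0)"
      by (rule Lim_transform_eventually)
    thus ?thesis unfolding \<phi>_def by (simp add: ac_simps)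
  qed
  show False by (rule key_growth[OF cont bnd pos c der])
qed

lemma ereal_eq_by_lt:
  fixes A B :: ereal
  assumes A: "A > 0" and B: "B > 0" and iff: "\<And>t. t \<ge> 0 \<Longrightarrow> ereal t < A \<longleftrightarrow> ereal t < B"
  shows "A = B"
proof (rule ccontr)
  assume ne: "A \<noteq> B"
  show False
  proof (cases "A < B")
    case True
    then obtain v where v: "A = ereal v" using A by (cases A) auto
    hence "v \<ge> 0" using A by simp
    thus False using iff[of v] v True by simp
  next
    case False
    hence "B < A" using ne by simp
    then obtain v where v: "B = ereal v" using B by (cases B) auto
    hence "v \<ge> 0" using B by simp
    thus False using iff[of v] v \<open>B < A\<close> by simp
  qed
qed

lemma lifetime:
  assumes L: "local_semigroup m T" and s: "0 \<le> s" and sm: "ereal s < m x"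
  shows "m (T s x) = m x - ereal s"
proof (rule ereal_eq_by_lt)
  have mpos: "\<And>x. 0 < m x" and iff: "\<And>t s x. 0 \<le> t \<Longrightarrow> 0 \<le> s \<Longrightarrow>
        ((ereal s < m x \<and> ereal t < m (T s x)) \<longleftrightarrow> ereal (t + s) < m x)"
    using L unfolding local_semigroup_def by auto
  show "0 < m (T s x)" by (rule mpos)
  show "0 < m x - ereal s" using sm by (cases "m x") auto
  fix t :: real assume t: "t \<ge> 0"
  have "ereal t < m (T s x) \<longleftrightarrow> ereal (t + s) < m x" using iff[OF t s, of x] sm by auto
  also have "\<dots> \<longleftrightarrow> ereal t < m x - ereal s" using mpos[of x] by (cases "m x") auto
  finally show "ereal t < m (T s x) \<longleftrightarrow> ereal t < m x - ereal s" .
qed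

definition gexp :: "real \<Rightarrow> real" where "gexp s = (if s \<le> 0 then 0 else exp (-1/s))"

lemma gexp_cont: "continuous_on UNIV gexp"
proof (rule continuous_at_imp_continuous_on, intro ballI)
  fix s :: real
  consider "s < 0" | "s = 0" | "s > 0" by linarith
  thus "isCont gexp s"
  proof cases
    case 1
    have "eventually (\<lambda>y. gexp y = 0) (nhds s)"
      using eventually_nhds_in_open[of "{..<0}" s] 1
      by (auto elim!: eventually_mono simp: gexp_def)
    thus ?thesis using isCont_cong by fastforce
  next
    case 3
    have "eventually (\<lambda>y. gexp y = exp (-1/y)) (nhds s)"
      using eventually_nhds_in_open[of "{0<..}" s] 3
      by (auto elim!: eventually_mono simp: gexp_def)
    moreover have "isCont (\<lambda>y. exp (-1/y)) s" using 3 by (intro continuous_intros) auto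
    ultimately show ?thesis by (simp add: isCont_cong)
  next
    case 2
    have l: "(gexp \<longlongrightarrow> 0) (at_left 0)"
    proof (rule Lim_transform_eventually[OF tendsto_const])
      show "eventually (\<lambda>y. 0 = gexp y) (at_left (0::real))"
        by (simp add: eventually_at_filter gexp_def)
    qed
    have r0: "((\<lambda>y::real. exp (-1/y)) \<longlongrightarrow> 0) (at_right 0)" by real_asymp
    have r: "(gexp \<longlongrightarrow> 0) (at_right 0)"
    proof (rule Lim_transform_eventually[OF r0])
      show "eventually (\<lambda>y. exp (-1/y) = gexp y) (at_right (0::real))"
        by (simp add: eventually_at_filter gexp_def)
    qed
    have "(gexp \<longlongrightarrow> 0) (at 0)" by (rule filterlim_split_at[OF l r])
    moreover have "gexp 0 = 0" by (simp add: gexp_def)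
    ultimately show ?thesis unfolding 2 isCont_def by simp
  qed
qed

lemma gexp_bound: "\<bar>gexp s\<bar> \<le> 1"
  by (simp add: gexp_def)

lemma local_eig:
  fixes T :: "real \<Rightarrow> 'a::metric_space \<Rightarrow> 'a" and m :: "'a \<Rightarrow> ereal"
  assumes L: "local_semigroup m T"
  shows "has_positive_eigenvalue (lie_generator T)"
proof -
  have mpos: "\<And>x. 0 < m x" and minv: "continuous_on UNIV (\<lambda>x. inverse (m x))"
    and exfin: "\<exists>x. m x \<noteq> \<infinity>"
    using L unfolding local_semigroup_def by auto
  define h where "h x = real_of_ereal (inverse (m x))" for x
  have rng: "(\<lambda>x. inverse (m x)) ` UNIV \<subseteq> UNIV - {\<infinity>, -\<infinity>}"
  proof safe
    fix x assume "inverse (m x) = \<infinity>" thus False using mpos[of x] by (cases "m x") auto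
  next
    fix x assume "inverse (m x) = -\<infinity>" thus False using mpos[of x] by (cases "m x") auto
  qed simp
  have hcont: "continuous_on UNIV h" unfolding h_def
    by (rule continuous_on_compose2[OF continuous_on_real minv rng])
  define F where "F x = gexp (h x)" for x
  have Finf: "F x = 0" if "m x = \<infinity>" for x
    using that unfolding F_def h_def gexp_def by simp
  have Ffin: "F x = exp (-r)" if "m x = ereal r" for x r
  proof -
    have r: "r > 0" using mpos[of x] that by simp
    hence "h x = 1/r" unfolding h_def using that by (simp add: inverse_eq_divide)
    thus ?thesis unfolding F_def gexp_def using r by simp
  qed
  have Fb: "F \<in> bcontfun" unfolding F_def
    by (rule bcontfun_normI[OF continuous_on_compose2[OF gexp_cont hcont], where b=1]) (auto simp: gexp_bound)
  define f where "f = Bcontfun F"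
  have fF: "apply_bcontfun f = F" unfolding f_def using Fb by (simp add: Bcontfun_inverse)
  have f0: "f \<noteq> 0"
  proof
    assume "f = 0"
    obtain x0 where "m x0 \<noteq> \<infinity>" using exfin by blast
    then obtain r where r: "m x0 = ereal r" using mpos[of x0] by (cases "m x0") auto
    have "F x0 = 0" using \<open>f = 0\<close> fF by (metis zero_bcontfun.rep_eq)
    thus False using Ffin[OF r] by simp
  qed
  have gen: "((\<lambda>t. (F (T t x) - F x) / t) \<longlongrightarrow> F x) (at_right 0)" for x
  proof (cases "m x")
    case PInf
    have "eventually (\<lambda>t. 0 = (F (T t x) - F x) / t) (at_right 0)"
      using eventually_at_right_less[of 0]
    proof (rule eventually_mono)
      fix t :: real assume t: "0 < t"
      have "m (T t x) = \<infinity>" using lifetime[OF L, of t x] t PInf by simp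
      thus "0 = (F (T t x) - F x) / t" using Finf PInf by simp
    qed
    hence "((\<lambda>t. (F (T t x) - F x) / t) \<longlongrightarrow> 0) (at_right 0)"
      by (rule Lim_transform_eventually[OF tendsto_const])
    thus ?thesis using Finf PInf by simp
  next
    case (real r)
    have r: "r > 0" using mpos[of x] real by simp
    have lim0: "((\<lambda>t::real. (exp t - 1) / t) \<longlongrightarrow> 1) (at_right 0)" by real_asymp
    have lim: "((\<lambda>t. exp (-r) * ((exp t - 1) / t)) \<longlongrightarrow> exp (-r) * 1) (at_right 0)"
      by (intro tendsto_mult tendsto_const lim0)
    have "eventually (\<lambda>t. exp (-r) * ((exp t - 1) / t) = (F (T t x) - F x) / t) (at_right 0)"
      using eventually_at_right_real[OF r]
    proof (rule eventually_mono)
      fix t :: real assume t: "t \<in> {0<..<r}"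
      have "m (T t x) = ereal (r - t)" using lifetime[OF L, of t x] t real by simp
      hence "F (T t x) = exp (t - r)" using Ffin by simp
      moreover have "exp (t - r) = exp t * exp (-r)" by (simp add: exp_add[symmetric])
      ultimately show "exp (-r) * ((exp t - 1) / t) = (F (T t x) - F x) / t"
        using Ffin[OF real] by (simp add: algebra_simps diff_divide_distrib)
    qed
    hence "((\<lambda>t. (F (T t x) - F x) / t) \<longlongrightarrow> exp (-r) * 1) (at_right 0)"
      by (rule Lim_transform_eventually[OF lim])
    thus ?thesis using Ffin[OF real] by simp
  next
    case MInf
    thus ?thesis using mpos[of x] by simp
  qed
  have g1: "(f, 1 *\<^sub>R f) \<in> lie_generator T"
    unfolding lie_generator_def using gen by (simp add: fF)
  have "\<exists>c>0. \<exists>f. f \<noteq> 0 \<and> (f, c *\<^sub>R f) \<in> lie_generator T"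
    by (rule exI[of _ "1::real"], rule conjI, simp, rule exI[of _ f], rule conjI[OF f0 g1])
  thus ?thesis unfolding has_positive_eigenvalue_def .
qed

theorem theorem3:
  fixes T :: "real \<Rightarrow> 'a::polish_space \<Rightarrow> 'a" and m :: "'a \<Rightarrow> ereal"
  assumes "global_semigroup T \<or> local_semigroup m T"
  shows "has_positive_eigenvalue (lie_generator T) \<longleftrightarrow> local_semigroup m T"
proof (cases "local_semigroup m T")
  case True
  thus ?thesis using local_eig[of m T] by simp
next
  case False
  hence "global_semigroup T" using assms by simp
  thus ?thesis using global_no_eig[of T] False by simp
qed

end
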